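(* Let $G=A*_C\varphi$ with $|A/C|\ge2$, $|A/\varphi(C)|\ge2$ and generating set $\{t\}\cup(A\setminus\{1\})$. Let $w=t^{n_1}a_1t^{n_2}a_2\cdots t^{n_I}a_I$ be the word (of length $\sum_i|n_i|+I$) with $a_i\in A\setminus\{1\}$ single letters and $n_i\in\mathbb{Z}\setminus\{0\}$. Suppose either Condition I: $n_1,n_3,n_5,\dots>0$, $n_2,n_4,\dots<0$, $a_1,a_3,a_5,\dots\notin C$, $a_2,a_4,\dots\notin\varphi(C)$; or Condition II: $n_1,n_3,\dots<0$, $n_2,n_4,\dots>0$, $a_1,a_3,\dots\notin\varphi(C)$, $a_2,a_4,\dots\notin C$. Then $w$ is a geodesic, i.e. its length equals the minimal length of a word representing $\bar w$.
   Context: $A$ is a group, $C\le A$, $\varphi:C\to A$ an injective homomorphism, $G=A*_C\varphi=\langle A,t\mid c=t^{-1}\varphi(c)t\ \forall c\in C\rangle$. Words are finite sequences of letters from $\{t,t^{-1}\}\cup(A\setminus\{1\})$, $t^{n}$ denoting $|n|$ consecutive letters $t^{\pm1}$; $\bar w$ is the element represented. *)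

theory Defs
  imports "HOL-Algebra.Group"
begin

datatype 'a letter = T | Tinv | L 'a

definition valid_word :: "('a, 'b) monoid_scheme \<Rightarrow> 'a letter list \<Rightarrow> bool" where
  "valid_word A w \<longleftrightarrow> (\<forall>a. L a \<in> set w \<longrightarrow> a \<in> carrier A \<and> a \<noteq> \<one>\<^bsub>A\<^esub>)"

text \<open>Equality of represented elements in G = A *_C phi: the congruence on words
  generated by the (monoid) presentation of G: t t^-1 = 1, t^-1 t = 1, the
  multiplication table of A, and t c = phi(c) t for c in C
  (equivalent to c = t^-1 phi(c) t).\<close>
inductive hnn_eq :: "('a, 'b) monoid_scheme \<Rightarrow> 'a set \<Rightarrow> ('a \<Rightarrow> 'a)
    \<Rightarrow> 'a letter list \<Rightarrow> 'a letter list \<Rightarrow> bool"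
  for A C \<phi> where
  refl: "hnn_eq A C \<phi> u u"
| sym: "hnn_eq A C \<phi> u v \<Longrightarrow> hnn_eq A C \<phi> v u"
| trans: "hnn_eq A C \<phi> u v \<Longrightarrow> hnn_eq A C \<phi> v w \<Longrightarrow> hnn_eq A C \<phi> u w"
| ctxt: "hnn_eq A C \<phi> u v \<Longrightarrow> hnn_eq A C \<phi> (x @ u @ y) (x @ v @ y)"
| t_tinv: "hnn_eq A C \<phi> [T, Tinv] []"
| tinv_t: "hnn_eq A C \<phi> [Tinv, T] []"
| one: "hnn_eq A C \<phi> [L \<one>\<^bsub>A\<^esub>] []"
| mult: "a \<in> carrier A \<Longrightarrow> b \<in> carrier A \<Longrightarrow> hnn_eq A C \<phi> [L a, L b] [L (a \<otimes>\<^bsub>A\<^esub> b)]"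
| conj: "c \<in> C \<Longrightarrow> hnn_eq A C \<phi> [T, L c] [L (\<phi> c), T]"

definition tpow :: "int \<Rightarrow> 'a letter list" where
  "tpow n = replicate (nat \<bar>n\<bar>) (if n > 0 then T else Tinv)"

definition alt_word :: "int list \<Rightarrow> 'a list \<Rightarrow> 'a letter list" where
  "alt_word ns as = concat (map (\<lambda>i. tpow (ns ! i) @ [L (as ! i)]) [0..<length ns])"

definition geodesic :: "('a, 'b) monoid_scheme \<Rightarrow> 'a set \<Rightarrow> ('a \<Rightarrow> 'a) \<Rightarrow> 'a letter list \<Rightarrow> bool" where
  "geodesic A C \<phi> w \<longleftrightarrow>
     (\<forall>v. valid_word A v \<longrightarrow> hnn_eq A C \<phi> v w \<longrightarrow> length w \<le> length v)"

end

theory Submission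
  imports Defs
begin


locale hnn = group A for A :: "('a, 'b) monoid_scheme" (structure) +
  fixes C :: "'a set" and \<phi> :: "'a \<Rightarrow> 'a"
  assumes sub: "subgroup C A" and hom: "\<phi> \<in> hom (A\<lparr>carrier := C\<rparr>) A" and inj: "inj_on \<phi> C"
begin

abbreviation "D \<equiv> \<phi> ` C"
definition "\<psi> = the_inv_into C \<phi>"

lemma phi_mult: "x \<in> C \<Longrightarrow> y \<in> C \<Longrightarrow> \<phi> (x \<otimes> y) = \<phi> x \<otimes> \<phi> y"
  using hom unfolding hom_def by auto

lemma phi_carrier: "x \<in> C \<Longrightarrow> \<phi> x \<in> carrier A"
  using hom unfolding hom_def by auto

lemma C_carrier: "x \<in> C \<Longrightarrow> x \<in> carrier A"
  using sub subgroup.subset by blast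

lemma subD: "subgroup D A"
proof -
  have gC: "group (A\<lparr>carrier := C\<rparr>)" using sub subgroup_imp_group by blast
  have "group_hom (A\<lparr>carrier := C\<rparr>) A \<phi>"
    using gC hom is_group by (simp add: group_hom_def group_hom_axioms_def)
  then show ?thesis using group_hom.img_is_subgroup by fastforce
qed


lemma phi_psi: "d \<in> D \<Longrightarrow> \<phi> (\<psi> d) = d"
  unfolding \<psi>_def by (rule f_the_inv_into_f[OF inj])

lemma psi_phi: "c \<in> C \<Longrightarrow> \<psi> (\<phi> c) = c"
  unfolding \<psi>_def by (rule the_inv_into_f_f[OF inj])

lemma psi_in: "d \<in> D \<Longrightarrow> \<psi> d \<in> C"
proof -
  assume "d \<in> D" then obtain c where c: "c \<in> C" and dc: "d = \<phi> c" by (rule imageE)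
  have "\<psi> d = c" unfolding dc by (rule psi_phi[OF c])
  then show ?thesis using c by (simp only:)
qed

lemma psi_mult: "x \<in> D \<Longrightarrow> y \<in> D \<Longrightarrow> \<psi> (x \<otimes> y) = \<psi> x \<otimes> \<psi> y"
proof -
  assume x: "x \<in> D" and y: "y \<in> D"
  obtain a where a: "a \<in> C" "x = \<phi> a" using x by (rule imageE) blast
  obtain b where b: "b \<in> C" "y = \<phi> b" using y by (rule imageE) blast
  have ab: "a \<otimes> b \<in> C" using subgroup.m_closed[OF sub a(1) b(1)] .
  have "x \<otimes> y = \<phi> (a \<otimes> b)" unfolding a(2) b(2) by (rule HOL.sym[OF phi_mult[OF a(1) b(1)]])
  then have "\<psi> (x \<otimes> y) = a \<otimes> b" using psi_phi[OF ab] by (simp only:)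
  moreover have "\<psi> x = a" unfolding a(2) using psi_phi[OF a(1)] .
  moreover have "\<psi> y = b" unfolding b(2) using psi_phi[OF b(1)] .
  ultimately show ?thesis by (simp only:)
qed

definition rep :: "'a set \<Rightarrow> 'a \<Rightarrow> 'a" where
  "rep P g = (if g \<in> P then \<one> else (SOME r. r \<in> carrier A \<and> inv r \<otimes> g \<in> P))"

context
  fixes P assumes P: "subgroup P A"
begin

lemma P_carrier: "x \<in> P \<Longrightarrow> x \<in> carrier A"
  using P subgroup.subset by blast

lemma rep_props: "g \<in> carrier A \<Longrightarrow> rep P g \<in> carrier A \<and> inv (rep P g) \<otimes> g \<in> P"
proof (cases "g \<in> P")
  case True
  then show ?thesis unfolding rep_def by (simp add: P_carrier)
next
  case False
  assume g: "g \<in> carrier A"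
  have "\<exists>r. r \<in> carrier A \<and> inv r \<otimes> g \<in> P"
    by (rule exI[of _ g]) (simp add: g subgroup.one_closed[OF P])
  then have "(SOME r. r \<in> carrier A \<and> inv r \<otimes> g \<in> P) \<in> carrier A \<and> inv (SOME r. r \<in> carrier A \<and> inv r \<otimes> g \<in> P) \<otimes> g \<in> P"
    by (rule someI_ex)
  then show ?thesis using False unfolding rep_def by simp
qed

lemma rep_carrier: "g \<in> carrier A \<Longrightarrow> rep P g \<in> carrier A"
  using rep_props by blast

lemma rep_in: "g \<in> carrier A \<Longrightarrow> inv (rep P g) \<otimes> g \<in> P"
  using rep_props by blast

lemma rep_one_iff: "g \<in> carrier A \<Longrightarrow> rep P g = \<one> \<longleftrightarrow> g \<in> P"
proof
  assume g: "g \<in> carrier A" and "rep P g = \<one>"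
  then have "inv \<one> \<otimes> g \<in> P" using rep_in[OF g] by simp
  then show "g \<in> P" using g by simp
next
  assume "g \<in> P" then show "rep P g = \<one>" by (simp add: rep_def)
qed

lemma rep_mult: "g \<in> carrier A \<Longrightarrow> h \<in> P \<Longrightarrow> rep P (g \<otimes> h) = rep P g"
proof -
  assume g: "g \<in> carrier A" and h: "h \<in> P"
  have hc: "h \<in> carrier A" using h P_carrier by blast
  have hi: "inv h \<in> P" using subgroup.m_inv_closed[OF P h] .
  have e1: "\<And>x. x \<in> carrier A \<Longrightarrow> x = (x \<otimes> h) \<otimes> inv h"
    using hc by (simp add: m_assoc)
  have iff: "g \<otimes> h \<in> P \<longleftrightarrow> g \<in> P"
  proof
    assume "g \<otimes> h \<in> P"
    then have "(g \<otimes> h) \<otimes> inv h \<in> P" using subgroup.m_closed[OF P] hi by blast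
    then show "g \<in> P" using e1[OF g] by simp
  next
    assume "g \<in> P" then show "g \<otimes> h \<in> P" using subgroup.m_closed[OF P] h by blast
  qed
  have "\<And>r. r \<in> carrier A \<Longrightarrow> inv r \<otimes> (g \<otimes> h) \<in> P \<longleftrightarrow> inv r \<otimes> g \<in> P"
  proof -
    fix r assume r: "r \<in> carrier A"
    have eq: "inv r \<otimes> (g \<otimes> h) = (inv r \<otimes> g) \<otimes> h" using r g hc by (simp add: m_assoc)
    show "inv r \<otimes> (g \<otimes> h) \<in> P \<longleftrightarrow> inv r \<otimes> g \<in> P"
    proof
      assume "inv r \<otimes> (g \<otimes> h) \<in> P"
      then have "(inv r \<otimes> g \<otimes> h) \<otimes> inv h \<in> P" using eq subgroup.m_closed[OF P] hi by simp
      then show "inv r \<otimes> g \<in> P" using e1[of "inv r \<otimes> g"] r g by simp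
    next
      assume "inv r \<otimes> g \<in> P" then show "inv r \<otimes> (g \<otimes> h) \<in> P"
        using eq subgroup.m_closed[OF P] h by simp
    qed
  qed
  then have "(\<lambda>r. r \<in> carrier A \<and> inv r \<otimes> (g \<otimes> h) \<in> P) = (\<lambda>r. r \<in> carrier A \<and> inv r \<otimes> g \<in> P)"
    by blast
  then show ?thesis using iff unfolding rep_def by simp
qed

lemma rep_idem: "g \<in> carrier A \<Longrightarrow> rep P (rep P g) = rep P g"
proof -
  assume g: "g \<in> carrier A"
  have r: "rep P g \<in> carrier A" using rep_carrier g by blast
  have "rep P g \<otimes> (inv (rep P g) \<otimes> g) = g" using r g by (simp add: m_assoc[symmetric])
  then have "rep P g = rep P (rep P g \<otimes> (inv (rep P g) \<otimes> g))" by simp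
  also have "\<dots> = rep P (rep P g)" using rep_mult r rep_in g by blast
  finally show ?thesis by simp
qed

end

end


context hnn begin

definition Pof :: "bool \<Rightarrow> 'a set" where "Pof e = (if e then D else C)"
definition Q :: "bool \<Rightarrow> 'a set" where "Q e = (if e then C else D)"

lemma subP: "subgroup (Pof e) A" using sub subD by (simp add: Pof_def)
lemma subQ: "subgroup (Q e) A" using sub subD by (simp add: Q_def)

definition actT :: "'a \<times> (bool \<times> 'a) list \<Rightarrow> 'a \<times> (bool \<times> 'a) list" where
  "actT x = (let g = fst x; tl = snd x; r = rep D g in
     if r = \<one> \<and> tl \<noteq> [] \<and> \<not> fst (hd tl) then (snd (hd tl) \<otimes> \<psi> g, List.tl tl)
     else (\<psi> (inv r \<otimes> g), (True, r) # tl))"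

definition actTi :: "'a \<times> (bool \<times> 'a) list \<Rightarrow> 'a \<times> (bool \<times> 'a) list" where
  "actTi x = (let g = fst x; tl = snd x; r = rep C g in
     if r = \<one> \<and> tl \<noteq> [] \<and> fst (hd tl) then (snd (hd tl) \<otimes> \<phi> g, List.tl tl)
     else (\<phi> (inv r \<otimes> g), (False, r) # tl))"

definition actL :: "'a \<Rightarrow> 'a \<times> (bool \<times> 'a) list \<Rightarrow> 'a \<times> (bool \<times> 'a) list" where
  "actL a x = (if a \<in> carrier A then (fst x \<otimes> a, snd x) else x)"

fun act :: "'a letter \<Rightarrow> 'a \<times> (bool \<times> 'a) list \<Rightarrow> 'a \<times> (bool \<times> 'a) list" where
  "act T x = actT x" | "act Tinv x = actTi x" | "act (L a) x = actL a x"

fun actw :: "'a letter list \<Rightarrow> 'a \<times> (bool \<times> 'a) list \<Rightarrow> 'a \<times> (bool \<times> 'a) list" where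
  "actw [] x = x" | "actw (l # u) x = actw u (act l x)"

lemma actw_append: "actw (u @ v) x = actw v (actw u x)"
  by (induction u arbitrary: x) auto

fun vt :: "(bool \<times> 'a) list \<Rightarrow> bool" where
  "vt [] = True"
| "vt ((e, r) # rest) = (r \<in> carrier A \<and> rep (Pof e) r = r \<and> (r = \<one> \<longrightarrow> rest = [] \<or> fst (hd rest) = e) \<and> vt rest)"

definition vs :: "'a \<times> (bool \<times> 'a) list \<Rightarrow> bool" where
  "vs x = (fst x \<in> carrier A \<and> vt (snd x))"

lemma vt_Cons: "vt (p # rest) \<Longrightarrow> vt rest"
  by (cases p) auto

lemma D_carrier: "x \<in> D \<Longrightarrow> x \<in> carrier A"
  using subD subgroup.subset by blast

lemma actT_cancel: "rep D g = \<one> \<Longrightarrow> actT (g, (False, r1) # ts') = (r1 \<otimes> \<psi> g, ts')"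
  unfolding actT_def Let_def by simp

lemma actT_nc: "\<not> (rep D g = \<one> \<and> ts \<noteq> [] \<and> \<not> fst (hd ts)) \<Longrightarrow>
    actT (g, ts) = (\<psi> (inv (rep D g) \<otimes> g), (True, rep D g) # ts)"
  unfolding actT_def Let_def by auto

lemma actTi_cancel: "rep C g = \<one> \<Longrightarrow> actTi (g, (True, r1) # ts') = (r1 \<otimes> \<phi> g, ts')"
  unfolding actTi_def Let_def by simp

lemma actTi_nc: "\<not> (rep C g = \<one> \<and> ts \<noteq> [] \<and> fst (hd ts)) \<Longrightarrow>
    actTi (g, ts) = (\<phi> (inv (rep C g) \<otimes> g), (False, rep C g) # ts)"
  unfolding actTi_def Let_def by auto

lemma vs_actT: assumes "vs x" shows "vs (actT x)"
proof -
  obtain g ts where x: "x = (g, ts)" by (cases x)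
  have g: "g \<in> carrier A" and vt: "vt ts" using assms x vs_def by auto
  have r: "rep D g \<in> carrier A" "inv (rep D g) \<otimes> g \<in> D" using rep_carrier[OF subD g] rep_in[OF subD g] by auto
  show ?thesis
  proof (cases "rep D g = \<one> \<and> ts \<noteq> [] \<and> \<not> fst (hd ts)")
    case True
    then have gD: "g \<in> D" using rep_one_iff[OF subD g] by simp
    obtain r1 ts' where ts: "ts = (False, r1) # ts'" using True by (cases ts) auto
    have "r1 \<in> carrier A" "vt ts'" using vt ts by auto
    moreover have "\<psi> g \<in> carrier A" using gD psi_in C_carrier by blast
    ultimately show ?thesis using True x ts actT_cancel vs_def by simp
  next
    case False
    have "\<psi> (inv (rep D g) \<otimes> g) \<in> carrier A" using psi_in r C_carrier by blast
    moreover have "rep (Pof True) (rep D g) = rep D g" using rep_idem[OF subD g] Pof_def by simp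
    ultimately show ?thesis using False x vt r actT_nc vs_def by auto
  qed
qed

lemma vs_actTi: assumes "vs x" shows "vs (actTi x)"
proof -
  obtain g ts where x: "x = (g, ts)" by (cases x)
  have g: "g \<in> carrier A" and vt: "vt ts" using assms x vs_def by auto
  have r: "rep C g \<in> carrier A" "inv (rep C g) \<otimes> g \<in> C" using rep_carrier[OF sub g] rep_in[OF sub g] by auto
  show ?thesis
  proof (cases "rep C g = \<one> \<and> ts \<noteq> [] \<and> fst (hd ts)")
    case True
    then have gD: "g \<in> C" using rep_one_iff[OF sub g] by simp
    obtain r1 ts' where ts: "ts = (True, r1) # ts'" using True by (cases ts) auto
    have "r1 \<in> carrier A" "vt ts'" using vt ts by auto
    moreover have "\<phi> g \<in> carrier A" using gD phi_carrier by blast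
    ultimately show ?thesis using True x ts actTi_cancel vs_def by simp
  next
    case False
    have "\<phi> (inv (rep C g) \<otimes> g) \<in> carrier A" using phi_carrier r by blast
    moreover have "rep (Pof False) (rep C g) = rep C g" using rep_idem[OF sub g] Pof_def by simp
    ultimately show ?thesis using False x vt r actTi_nc vs_def by auto
  qed
qed

lemma vs_actL: "vs x \<Longrightarrow> vs (actL a x)"
  unfolding vs_def actL_def by auto

lemma vs_act: "vs x \<Longrightarrow> vs (act l x)"
  by (cases l) (auto simp: vs_actT vs_actTi vs_actL)

lemma vs_actw: "vs x \<Longrightarrow> vs (actw u x)"
  by (induction u arbitrary: x) (auto simp: vs_act)

end

context hnn begin

lemma canc1: "r \<in> carrier A \<Longrightarrow> g \<in> carrier A \<Longrightarrow> r \<otimes> (inv r \<otimes> g) = g"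
  by (simp add: m_assoc[symmetric])
lemma canc2: "r \<in> carrier A \<Longrightarrow> g \<in> carrier A \<Longrightarrow> inv r \<otimes> (r \<otimes> g) = g"
  by (simp add: m_assoc[symmetric])

lemma TTi: assumes "vs x" shows "actTi (actT x) = x"
proof -
  obtain g ts where x: "x = (g, ts)" by (cases x)
  have g: "g \<in> carrier A" and vt: "vt ts" using assms x vs_def by auto
  have r: "rep D g \<in> carrier A" "inv (rep D g) \<otimes> g \<in> D" using rep_carrier[OF subD g] rep_in[OF subD g] by auto
  show ?thesis
  proof (cases "rep D g = \<one> \<and> ts \<noteq> [] \<and> \<not> fst (hd ts)")
    case True
    then have gD: "g \<in> D" using rep_one_iff[OF subD g] by simp
    obtain r1 ts' where ts: "ts = (False, r1) # ts'" using True by (cases ts) auto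
    have r1: "r1 \<in> carrier A" "rep C r1 = r1" "r1 = \<one> \<longrightarrow> ts' = [] \<or> \<not> fst (hd ts')"
      using vt ts Pof_def by auto
    have pg: "\<psi> g \<in> C" using gD psi_in by blast
    have a1: "actT x = (r1 \<otimes> \<psi> g, ts')" using True x ts actT_cancel by simp
    have rr: "rep C (r1 \<otimes> \<psi> g) = r1" using rep_mult[OF sub r1(1) pg] r1(2) by simp
    have "actTi (r1 \<otimes> \<psi> g, ts') = (\<phi> (inv r1 \<otimes> (r1 \<otimes> \<psi> g)), (False, r1) # ts')"
      using actTi_nc[of "r1 \<otimes> \<psi> g" ts'] rr r1(3) by auto
    also have "\<dots> = (g, ts)" using canc2[OF r1(1) C_carrier[OF pg]] phi_psi[OF gD] ts by simp
    finally show ?thesis using a1 x by simp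
  next
    case False
    have c: "\<psi> (inv (rep D g) \<otimes> g) \<in> C" using psi_in r by blast
    have a1: "actT x = (\<psi> (inv (rep D g) \<otimes> g), (True, rep D g) # ts)" using False x actT_nc by simp
    have "rep C (\<psi> (inv (rep D g) \<otimes> g)) = \<one>" using rep_one_iff[OF sub C_carrier[OF c]] c by simp
    then have "actTi (actT x) = (rep D g \<otimes> \<phi> (\<psi> (inv (rep D g) \<otimes> g)), ts)"
      using a1 actTi_cancel by simp
    also have "\<dots> = x" using phi_psi[OF r(2)] canc1[OF r(1) g] x by simp
    finally show ?thesis .
  qed
qed

lemma TiT: assumes "vs x" shows "actT (actTi x) = x"
proof -
  obtain g ts where x: "x = (g, ts)" by (cases x)
  have g: "g \<in> carrier A" and vt: "vt ts" using assms x vs_def by auto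
  have r: "rep C g \<in> carrier A" "inv (rep C g) \<otimes> g \<in> C" using rep_carrier[OF sub g] rep_in[OF sub g] by auto
  show ?thesis
  proof (cases "rep C g = \<one> \<and> ts \<noteq> [] \<and> fst (hd ts)")
    case True
    then have gD: "g \<in> C" using rep_one_iff[OF sub g] by simp
    obtain r1 ts' where ts: "ts = (True, r1) # ts'" using True by (cases ts) auto
    have r1: "r1 \<in> carrier A" "rep D r1 = r1" "r1 = \<one> \<longrightarrow> ts' = [] \<or> fst (hd ts')"
      using vt ts Pof_def by auto
    have pg: "\<phi> g \<in> D" using gD by blast
    have a1: "actTi x = (r1 \<otimes> \<phi> g, ts')" using True x ts actTi_cancel by simp
    have rr: "rep D (r1 \<otimes> \<phi> g) = r1" using rep_mult[OF subD r1(1) pg] r1(2) by simp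
    have "actT (r1 \<otimes> \<phi> g, ts') = (\<psi> (inv r1 \<otimes> (r1 \<otimes> \<phi> g)), (True, r1) # ts')"
      using actT_nc[of "r1 \<otimes> \<phi> g" ts'] rr r1(3) by auto
    also have "\<dots> = (g, ts)" using canc2[OF r1(1) D_carrier[OF pg]] psi_phi[OF gD] ts by simp
    finally show ?thesis using a1 x by simp
  next
    case False
    have c: "\<phi> (inv (rep C g) \<otimes> g) \<in> D" using r by blast
    have a1: "actTi x = (\<phi> (inv (rep C g) \<otimes> g), (False, rep C g) # ts)" using False x actTi_nc by simp
    have "rep D (\<phi> (inv (rep C g) \<otimes> g)) = \<one>" using rep_one_iff[OF subD D_carrier[OF c]] c by simp
    then have "actT (actTi x) = (rep C g \<otimes> \<psi> (\<phi> (inv (rep C g) \<otimes> g)), ts)"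
      using a1 actT_cancel by simp
    also have "\<dots> = x" using psi_phi[OF r(2)] canc1[OF r(1) g] x by simp
    finally show ?thesis .
  qed
qed

lemma conjL: assumes "vs x" "c \<in> C" shows "actL c (actT x) = actT (actL (\<phi> c) x)"
proof -
  obtain g ts where x: "x = (g, ts)" by (cases x)
  have g: "g \<in> carrier A" and vt: "vt ts" using assms x vs_def by auto
  have cc: "c \<in> carrier A" using C_carrier assms(2) .
  have pc: "\<phi> c \<in> D" using assms(2) by blast
  have pcc: "\<phi> c \<in> carrier A" using phi_carrier assms(2) .
  have r: "rep D g \<in> carrier A" "inv (rep D g) \<otimes> g \<in> D" using rep_carrier[OF subD g] rep_in[OF subD g] by auto
  have rr: "rep D (g \<otimes> \<phi> c) = rep D g" using rep_mult[OF subD g pc] .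
  have x2: "actL (\<phi> c) x = (g \<otimes> \<phi> c, ts)" using x pcc actL_def by simp
  show ?thesis
  proof (cases "rep D g = \<one> \<and> ts \<noteq> [] \<and> \<not> fst (hd ts)")
    case True
    then have gD: "g \<in> D" using rep_one_iff[OF subD g] by simp
    obtain r1 ts' where ts: "ts = (False, r1) # ts'" using True by (cases ts) auto
    have r1: "r1 \<in> carrier A" using vt ts by auto
    have "actL c (actT x) = (r1 \<otimes> \<psi> g \<otimes> c, ts')" using True x ts actT_cancel actL_def cc by simp
    also have "\<dots> = (r1 \<otimes> \<psi> (g \<otimes> \<phi> c), ts')"
      using psi_mult[OF gD pc] psi_phi[OF assms(2)] m_assoc r1 C_carrier[OF psi_in[OF gD]] cc by simp
    also have "\<dots> = actT (actL (\<phi> c) x)" using x2 ts True rr actT_cancel by simp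
    finally show ?thesis .
  next
    case False
    have in1: "inv (rep D g) \<otimes> g \<in> D" using r by simp
    have "actL c (actT x) = (\<psi> (inv (rep D g) \<otimes> g) \<otimes> c, (True, rep D g) # ts)"
      using False x actT_nc actL_def cc by simp
    also have "\<dots> = (\<psi> (inv (rep D g) \<otimes> (g \<otimes> \<phi> c)), (True, rep D g) # ts)"
      using psi_mult[OF in1 pc] psi_phi[OF assms(2)] m_assoc r g pcc by simp
    also have "\<dots> = actT (actL (\<phi> c) x)" using x2 False rr actT_nc[of "g \<otimes> \<phi> c" ts] by simp
    finally show ?thesis .
  qed
qed

lemma actL_one: "vs x \<Longrightarrow> actL \<one> x = x"
  unfolding actL_def vs_def by (cases x) auto

lemma actL_mult: "vs x \<Longrightarrow> a \<in> carrier A \<Longrightarrow> b \<in> carrier A \<Longrightarrow> actL b (actL a x) = actL (a \<otimes> b) x"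
  unfolding actL_def vs_def by (cases x) (auto simp: m_assoc)

lemma vs_init: "vs (\<one>, [])" unfolding vs_def by simp

lemma hnn_inv: "hnn_eq A C \<phi> u v \<Longrightarrow> vs x \<Longrightarrow> actw u x = actw v x"
proof (induction arbitrary: x rule: hnn_eq.induct)
  case (ctxt u v y z)
  then show ?case using vs_actw by (simp add: actw_append)
next
  case (mult a b)
  then show ?case using actL_mult by simp
next
  case (conj c)
  then show ?case using conjL by simp
qed (auto simp: TTi TiT actL_one)

end


fun tlet :: "bool \<Rightarrow> 'a letter" where "tlet True = T" | "tlet False = Tinv"

fun tsg :: "'a letter list \<Rightarrow> bool list" where
  "tsg [] = []" | "tsg (T # u) = True # tsg u" | "tsg (Tinv # u) = False # tsg u" | "tsg (L a # u) = tsg u"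

fun isL :: "'a letter \<Rightarrow> bool" where "isL (L a) = True" | "isL _ = False"

definition cntA :: "'a letter list \<Rightarrow> nat" where "cntA u = length (filter isL u)"

lemma tsg_append: "tsg (u @ v) = tsg u @ tsg v"
  by (induction u rule: tsg.induct) auto

lemma cntA_append: "cntA (u @ v) = cntA u + cntA v"
  unfolding cntA_def by simp

lemma length_split: "length u = length (tsg u) + cntA u"
  unfolding cntA_def by (induction u rule: tsg.induct) auto

lemma tlet_inj: "tlet e = tlet e' \<Longrightarrow> e = e'"
  by (cases e; cases e') auto

lemma hnn_ctxt': "hnn_eq A C \<phi> u v \<Longrightarrow> a = x @ u @ y \<Longrightarrow> b = x @ v @ y \<Longrightarrow> hnn_eq A C \<phi> a b"
  using hnn_eq.ctxt by blast

fun sc :: "bool list \<Rightarrow> nat" where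
  "sc (x # y # r) = (if x = y then 0 else 1) + sc (y # r)" | "sc _ = 0"

lemma sc_Cons: "sc (x # ys) = (if ys = [] then 0 else (if x = hd ys then 0 else 1) + sc ys)"
  by (cases ys) auto

lemma take_app_eq: "take k z = p \<Longrightarrow> length p = k \<Longrightarrow> take k (z @ w) = p"
proof -
  assume a: "take k z = p" "length p = k"
  then have "k \<le> length z" by (metis length_take min.absorb_iff1 min.commute)
  then show ?thesis using a by simp
qed

lemma take_eq_app: "take k z = p \<Longrightarrow> length p = k \<Longrightarrow> z = p @ drop k z"
  by (metis append_take_drop_id)

context hnn begin

definition bs :: "'a letter list \<Rightarrow> bool" where
  "bs z = (take 2 z = [T, Tinv] \<or> take 2 z = [Tinv, T] \<or> (\<exists>a b. take 2 z = [L a, L b]) \<or> take 1 z = [L \<one>]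
     \<or> (\<exists>c\<in>C. take 3 z = [T, L c, Tinv]) \<or> (\<exists>d\<in>D. take 3 z = [Tinv, L d, T]))"

definition reduced :: "'a letter list \<Rightarrow> bool" where
  "reduced u = (\<forall>i < length u. \<not> bs (drop i u))"

definition lc :: "'a letter list \<Rightarrow> bool" where
  "lc u = (\<forall>a. L a \<in> set u \<longrightarrow> a \<in> carrier A)"

lemma bs_append: "bs z \<Longrightarrow> bs (z @ w)"
  unfolding bs_def using take_app_eq
  by (smt (verit) length_Cons list.size(3) numeral_2_eq_2 numeral_3_eq_3 One_nat_def)

lemma bs_nonempty: "bs z \<Longrightarrow> z \<noteq> []"
  unfolding bs_def by auto

lemma red_bs: "reduced (x @ z) \<Longrightarrow> \<not> bs z"
proof
  assume r: "reduced (x @ z)" and b: "bs z"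
  then have "z \<noteq> []" using bs_nonempty by blast
  then have "length x < length (x @ z)" by simp
  then have "\<not> bs (drop (length x) (x @ z))" using r reduced_def by blast
  then show False using b by simp
qed

lemma red_pat: "reduced (x @ p @ y) \<Longrightarrow> bs p \<Longrightarrow> False"
  using red_bs bs_append by blast

lemma red_prefix: "reduced (u @ v) \<Longrightarrow> reduced u"
  unfolding reduced_def
proof (intro allI impI)
  fix i assume r: "\<forall>i<length (u @ v). \<not> bs (drop i (u @ v))" and i: "i < length u"
  show "\<not> bs (drop i u)"
  proof
    assume "bs (drop i u)"
    then have "bs (drop i u @ v)" by (rule bs_append)
    then show False using r[rule_format, of i] i by simp
  qed
qed

lemma red_Cons: "reduced (l # u) \<Longrightarrow> reduced u"
  unfolding reduced_def
proof (intro allI impI)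
  fix i assume r: "\<forall>i<length (l # u). \<not> bs (drop i (l # u))" and i: "i < length u"
  then show "\<not> bs (drop i u)" using r[rule_format, of "Suc i"] by simp
qed

lemma lc_append: "lc (u @ v) \<longleftrightarrow> lc u \<and> lc v"
  unfolding lc_def by auto

lemma step_pat: "hnn_eq A C \<phi> p q \<Longrightarrow> length q < length p \<Longrightarrow> lc q \<Longrightarrow>
   length (tsg q) \<le> length (tsg p) \<Longrightarrow> cntA q \<le> cntA p \<Longrightarrow> v = x @ p @ y \<Longrightarrow> lc v \<Longrightarrow>
   \<exists>v'. hnn_eq A C \<phi> v v' \<and> length v' < length v \<and> lc v' \<and> length (tsg v') \<le> length (tsg v) \<and> cntA v' \<le> cntA v"
  apply (rule exI[of _ "x @ q @ y"])
  apply (auto simp: tsg_append cntA_append lc_append intro: hnn_eq.ctxt)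
  done

lemma conj3: "c \<in> C \<Longrightarrow> hnn_eq A C \<phi> [T, L c, Tinv] [L (\<phi> c)]"
proof -
  assume c: "c \<in> C"
  have 1: "hnn_eq A C \<phi> [T, L c, Tinv] [L (\<phi> c), T, Tinv]"
    by (rule hnn_ctxt'[OF hnn_eq.conj[OF c], of _ "[]" "[Tinv]"]) auto
  have 2: "hnn_eq A C \<phi> [L (\<phi> c), T, Tinv] [L (\<phi> c)]"
    by (rule hnn_ctxt'[OF hnn_eq.t_tinv, of _ "[L (\<phi> c)]" "[]"]) auto
  show ?thesis using hnn_eq.trans[OF 1 2] .
qed

lemma conj3': "d \<in> D \<Longrightarrow> hnn_eq A C \<phi> [Tinv, L d, T] [L (\<psi> d)]"
proof -
  assume d: "d \<in> D"
  have c: "\<psi> d \<in> C" using psi_in d .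
  have e: "\<phi> (\<psi> d) = d" using phi_psi d .
  have 00: "hnn_eq A C \<phi> [T, L (\<psi> d)] [L (\<phi> (\<psi> d)), T]" by (rule hnn_eq.conj[OF c])
  have 0: "hnn_eq A C \<phi> [L d, T] [T, L (\<psi> d)]"
    using hnn_eq.sym[OF 00] unfolding e .
  have 1: "hnn_eq A C \<phi> [Tinv, L d, T] [Tinv, T, L (\<psi> d)]"
    by (rule hnn_ctxt'[OF 0, of _ "[Tinv]" "[]"]) auto
  have 2: "hnn_eq A C \<phi> [Tinv, T, L (\<psi> d)] [L (\<psi> d)]"
    by (rule hnn_ctxt'[OF hnn_eq.tinv_t, of _ "[]" "[L (\<psi> d)]"]) auto
  show ?thesis using hnn_eq.trans[OF 1 2] .
qed

lemma reduce_step: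
  assumes "lc v" "\<not> reduced v"
  shows "\<exists>v'. hnn_eq A C \<phi> v v' \<and> length v' < length v \<and> lc v' \<and> length (tsg v') \<le> length (tsg v) \<and> cntA v' \<le> cntA v"
proof -
  obtain i where i: "i < length v" "bs (drop i v)" using assms(2) reduced_def by blast
  define x where "x = take i v"
  define z where "z = drop i v"
  have v: "v = x @ z" unfolding x_def z_def by simp
  have bz: "bs z" using i z_def by simp
  show ?thesis
  proof -
    { assume h: "take 2 z = [T, Tinv]"
      then have vv: "v = x @ [T, Tinv] @ drop 2 z" using v take_eq_app[OF h] by simp
      have ?thesis by (rule step_pat[OF hnn_eq.t_tinv _ _ _ _ vv assms(1)]) (auto simp: lc_def cntA_def) }
    moreover
    { assume h: "take 2 z = [Tinv, T]"
      then have vv: "v = x @ [Tinv, T] @ drop 2 z" using v take_eq_app[OF h] by simp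
      have ?thesis by (rule step_pat[OF hnn_eq.tinv_t _ _ _ _ vv assms(1)]) (auto simp: lc_def cntA_def) }
    moreover
    { fix a b assume h: "take 2 z = [L a, L b]"
      then have vv: "v = x @ [L a, L b] @ drop 2 z" using v take_eq_app[OF h] by simp
      then have ab: "a \<in> carrier A" "b \<in> carrier A" using assms(1) lc_def by auto
      have ?thesis by (rule step_pat[OF hnn_eq.mult[OF ab] _ _ _ _ vv assms(1)]) (auto simp: lc_def cntA_def ab) }
    moreover
    { assume h: "take 1 z = [L \<one>]"
      then have vv: "v = x @ [L \<one>] @ drop 1 z" using v take_eq_app[OF h] by simp
      have ?thesis by (rule step_pat[OF hnn_eq.one _ _ _ _ vv assms(1)]) (auto simp: lc_def cntA_def) }
    moreover
    { fix c assume c: "c \<in> C" and h: "take 3 z = [T, L c, Tinv]"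
      then have vv: "v = x @ [T, L c, Tinv] @ drop 3 z" using v take_eq_app[OF h] by simp
      have ?thesis by (rule step_pat[OF conj3[OF c] _ _ _ _ vv assms(1)]) (auto simp: lc_def cntA_def phi_carrier[OF c]) }
    moreover
    { fix d assume d: "d \<in> D" and h: "take 3 z = [Tinv, L d, T]"
      then have vv: "v = x @ [Tinv, L d, T] @ drop 3 z" using v take_eq_app[OF h] by simp
      have ?thesis by (rule step_pat[OF conj3'[OF d] _ _ _ _ vv assms(1)]) (auto simp: lc_def cntA_def C_carrier[OF psi_in[OF d]]) }
    ultimately show ?thesis using bz unfolding bs_def by blast
  qed
qed

lemma reduce_ex:
  "lc v \<Longrightarrow> \<exists>u. hnn_eq A C \<phi> v u \<and> reduced u \<and> lc u \<and> length (tsg u) \<le> length (tsg v) \<and> cntA u \<le> cntA v"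
proof (induction "length v" arbitrary: v rule: less_induct)
  case less
  show ?case
  proof (cases "reduced v")
    case True
    then show ?thesis using less.prems hnn_eq.refl by blast
  next
    case False
    then obtain v' where v': "hnn_eq A C \<phi> v v'" "length v' < length v" "lc v'"
      "length (tsg v') \<le> length (tsg v)" "cntA v' \<le> cntA v"
      using reduce_step less.prems by blast
    then obtain u where u: "hnn_eq A C \<phi> v' u" "reduced u" "lc u" "length (tsg u) \<le> length (tsg v')" "cntA u \<le> cntA v'"
      using less.hyps by blast
    show ?thesis using hnn_eq.trans[OF v'(1) u(1)] u v' by (meson le_trans)
  qed
qed

end

context hnn begin

abbreviation "nf u \<equiv> actw u (\<one>, [])"

lemma sub_back: "subgroup P A \<Longrightarrow> g \<in> P \<Longrightarrow> g \<otimes> inv a \<in> P \<Longrightarrow> a \<in> carrier A \<Longrightarrow> a \<in> P"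
proof -
  assume P: "subgroup P A" and g: "g \<in> P" and h: "g \<otimes> inv a \<in> P" and a: "a \<in> carrier A"
  have gc: "g \<in> carrier A" using P g subgroup.subset by blast
  have "inv (g \<otimes> inv a) \<otimes> g \<in> P" using P g h by (simp add: subgroup.m_closed subgroup.m_inv_closed)
  moreover have "inv (g \<otimes> inv a) \<otimes> g = a" using gc a by (simp add: inv_mult_group m_assoc)
  ultimately show ?thesis by simp
qed

lemma rev_cases2:
  obtains "u = []" | l where "u = [l]" | u' l1 l2 where "u = u' @ [l1, l2]"
proof -
  consider "u = []" | l u1 where "u = u1 @ [l]" by (metis rev_exhaust)
  then show ?thesis
  proof cases
    case 1 then show ?thesis using that by blast
  next
    case (2 l u1)
    then show ?thesis
    proof (cases u1 rule: rev_exhaust)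
      case Nil then show ?thesis using 2 that by simp
    next
      case (snoc u' l1) then show ?thesis using 2 that by simp
    qed
  qed
qed


lemma red_TTi: "reduced (x @ [T, Tinv] @ y) \<Longrightarrow> False"
  by (rule red_pat[of x "[T, Tinv]" y]) (simp_all add: bs_def)
lemma red_TiT: "reduced (x @ [Tinv, T] @ y) \<Longrightarrow> False"
  by (rule red_pat[of x "[Tinv, T]" y]) (simp_all add: bs_def)
lemma red_LL: "reduced (x @ [L a, L b] @ y) \<Longrightarrow> False"
  by (rule red_pat[of x "[L a, L b]" y]) (simp_all add: bs_def)
lemma red_TcTi: "c \<in> C \<Longrightarrow> reduced (x @ [T, L c, Tinv] @ y) \<Longrightarrow> False"
  by (rule red_pat[of x "[T, L c, Tinv]" y]) (auto simp add: bs_def)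
lemma red_TidT: "d \<in> D \<Longrightarrow> reduced (x @ [Tinv, L d, T] @ y) \<Longrightarrow> False"
  by (rule red_pat[of x "[Tinv, L d, T]" y]) (auto simp add: bs_def)

lemma last_tsg: "map fst ts = rev (tsg u) \<Longrightarrow> ts \<noteq> [] \<Longrightarrow> tsg u \<noteq> [] \<and> last (tsg u) = fst (hd ts)"
proof -
  assume m: "map fst ts = rev (tsg u)" and t: "ts \<noteq> []"
  then have ne: "tsg u \<noteq> []" by (metis Nil_is_map_conv Nil_is_rev_conv)
  have "fst (hd ts) = hd (map fst ts)" using t by (simp add: hd_map)
  also have "\<dots> = hd (rev (tsg u))" using m by simp
  also have "\<dots> = last (tsg u)" using ne by (simp add: hd_rev)
  finally show ?thesis using ne by simp
qed

definition inv_ok :: "'a letter list \<Rightarrow> bool" where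
  "inv_ok u = (map fst (snd (nf u)) = rev (tsg u) \<and>
     (\<forall>u' e. u = u' @ [tlet e] \<longrightarrow> fst (nf u) \<in> Q e) \<and>
     (\<forall>u' e a. u = u' @ [tlet e, L a] \<longrightarrow> fst (nf u) \<otimes> inv a \<in> Q e))"

lemma nf_red: "reduced u \<Longrightarrow> lc u \<Longrightarrow> inv_ok u"
proof (induction u rule: rev_induct)
  case Nil
  then show ?case unfolding inv_ok_def by simp
next
  case (snoc l u0)
  have r0: "reduced u0" using red_prefix snoc.prems(1) by blast
  have l0: "lc u0" using snoc.prems(2) lc_append by blast
  have IH: "inv_ok u0" using snoc.IH r0 l0 by blast
  obtain g ts where st: "nf u0 = (g, ts)" by (cases "nf u0")
  have vst: "vs (g, ts)" using vs_actw[OF vs_init, of u0] st by simp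
  then have g: "g \<in> carrier A" using vs_def by simp
  have mf: "map fst ts = rev (tsg u0)" using IH st inv_ok_def by simp
  have nfs: "nf (u0 @ [l]) = act l (g, ts)" using st by (simp add: actw_append)
  show ?case
  proof (cases l)
    case (L a)
    have a: "a \<in> carrier A" using snoc.prems(2) L lc_def by simp
    have n1: "nf (u0 @ [l]) = (g \<otimes> a, ts)" using nfs L a actL_def by simp
    have c2: "g \<otimes> a \<otimes> inv a \<in> Q e" if "u0 @ [l] = u' @ [tlet e, L a']" for u' e a'
    proof -
      have "u0 = u' @ [tlet e]" "a' = a" using that L by auto
      then have "g \<in> Q e" using IH st inv_ok_def by auto
      then show ?thesis using g a by (simp add: m_assoc)
    qed
    have c1: "\<not> (u0 @ [l] = u' @ [tlet e])" for u' e using L by (cases e) auto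
    show ?thesis unfolding inv_ok_def using n1 mf L c1 c2 by (auto simp: tsg_append)
  next
    case T
    have nc: "\<not> (rep D g = \<one> \<and> ts \<noteq> [] \<and> \<not> fst (hd ts))"
    proof
      assume h: "rep D g = \<one> \<and> ts \<noteq> [] \<and> \<not> fst (hd ts)"
      then have gD: "g \<in> D" using rep_one_iff[OF subD g] by simp
      have lastF: "tsg u0 \<noteq> [] \<and> \<not> last (tsg u0)"
        using h last_tsg[OF mf] by simp
      show False
      proof (cases u0 rule: rev_cases2)
        case 1 then show ?thesis using lastF by simp
      next
        case (2 l1)
        then show ?thesis using lastF snoc.prems(1) T
        proof (cases l1)
          case Tinv then have "reduced ([] @ [Tinv, T] @ [])" using snoc.prems(1) T 2 by simp
          then show ?thesis by (rule red_TiT)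
        qed auto
      next
        case (3 u' l1 l2)
        show ?thesis
        proof (cases l2)
          case T then have "u0 = (u' @ [l1]) @ [T]" using 3 by simp
          then show ?thesis using lastF by (simp only: tsg_append) simp
        next
          case Tinv then have "reduced ((u' @ [l1]) @ [Tinv, T] @ [])" using snoc.prems(1) T 3 by simp
          then show ?thesis by (rule red_TiT)
        next
          case (L a)
          have a: "a \<in> carrier A" using snoc.prems(2) L 3 lc_def by simp
          show ?thesis
          proof (cases l1)
            case T then show ?thesis using lastF 3 L by (simp add: tsg_append)
          next
            case (L b) then have "reduced (u' @ [L b, L a] @ [T])" using snoc.prems(1) T 3 \<open>l2 = L a\<close> by simp
            then show ?thesis by (rule red_LL)
          next
            case Tinv
            have "u0 = u' @ [tlet False, L a]" using 3 Tinv \<open>l2 = L a\<close> by simp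
            then have "g \<otimes> inv a \<in> Q False" using IH st unfolding inv_ok_def by simp
            then have "a \<in> D" using sub_back[OF subD gD _ a] Q_def by simp
            moreover have "reduced (u' @ [Tinv, L a, T] @ [])" using snoc.prems(1) T 3 \<open>l2 = L a\<close> Tinv by simp
            ultimately show ?thesis by (rule red_TidT)
          qed
        qed
      qed
    qed
    have n1: "nf (u0 @ [l]) = (\<psi> (inv (rep D g) \<otimes> g), (True, rep D g) # ts)"
      using nfs T actT_nc[OF nc] by simp
    have inC: "\<psi> (inv (rep D g) \<otimes> g) \<in> C" using psi_in rep_in[OF subD g] by blast
    have c1: "\<psi> (inv (rep D g) \<otimes> g) \<in> Q e" if "u0 @ [l] = u' @ [tlet e]" for u' e
    proof -
      have "(tlet e :: 'a letter) = T" using that T by simp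
      then have "e" by (cases e) auto
      then show ?thesis using inC Q_def by simp
    qed
    have c2: "\<not> (u0 @ [l] = u' @ [tlet e, L a])" for u' e a using T by simp
    show ?thesis unfolding inv_ok_def using n1 mf T c1 c2 by (auto simp: tsg_append)
  next
    case Tinv
    have nc: "\<not> (rep C g = \<one> \<and> ts \<noteq> [] \<and> fst (hd ts))"
    proof
      assume h: "rep C g = \<one> \<and> ts \<noteq> [] \<and> fst (hd ts)"
      then have gD: "g \<in> C" using rep_one_iff[OF sub g] by simp
      have lastF: "tsg u0 \<noteq> [] \<and> last (tsg u0)"
        using h last_tsg[OF mf] by simp
      show False
      proof (cases u0 rule: rev_cases2)
        case 1 then show ?thesis using lastF by simp
      next
        case (2 l1)
        then show ?thesis using lastF snoc.prems(1) Tinv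
        proof (cases l1)
          case T then have "reduced ([] @ [T, Tinv] @ [])" using snoc.prems(1) Tinv 2 by simp
          then show ?thesis by (rule red_TTi)
        qed auto
      next
        case (3 u' l1 l2)
        show ?thesis
        proof (cases l2)
          case Tinv then have "u0 = (u' @ [l1]) @ [Tinv]" using 3 by simp
          then show ?thesis using lastF by (simp only: tsg_append) simp
        next
          case T then have "reduced ((u' @ [l1]) @ [T, Tinv] @ [])" using snoc.prems(1) Tinv 3 by simp
          then show ?thesis by (rule red_TTi)
        next
          case (L a)
          have a: "a \<in> carrier A" using snoc.prems(2) L 3 lc_def by simp
          show ?thesis
          proof (cases l1)
            case Tinv then show ?thesis using lastF 3 L by (simp add: tsg_append)
          next
            case (L b) then have "reduced (u' @ [L b, L a] @ [Tinv])" using snoc.prems(1) Tinv 3 \<open>l2 = L a\<close> by simp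
            then show ?thesis by (rule red_LL)
          next
            case T
            have "u0 = u' @ [tlet True, L a]" using 3 T \<open>l2 = L a\<close> by simp
            then have "g \<otimes> inv a \<in> Q True" using IH st unfolding inv_ok_def by simp
            then have "a \<in> C" using sub_back[OF sub gD _ a] Q_def by simp
            moreover have "reduced (u' @ [T, L a, Tinv] @ [])" using snoc.prems(1) Tinv 3 \<open>l2 = L a\<close> T by simp
            ultimately show ?thesis by (rule red_TcTi)
          qed
        qed
      qed
    qed
    have n1: "nf (u0 @ [l]) = (\<phi> (inv (rep C g) \<otimes> g), (False, rep C g) # ts)"
      using nfs Tinv actTi_nc[OF nc] by simp
    have inC: "\<phi> (inv (rep C g) \<otimes> g) \<in> D" using rep_in[OF sub g] by blast
    have c1: "\<phi> (inv (rep C g) \<otimes> g) \<in> Q e" if "u0 @ [l] = u' @ [tlet e]" for u' e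
    proof -
      have "(tlet e :: 'a letter) = Tinv" using that Tinv by simp
      then have "\<not> e" by (cases e) auto
      then show ?thesis using inC Q_def by simp
    qed
    have c2: "\<not> (u0 @ [l] = u' @ [tlet e, L a])" for u' e a using Tinv by simp
    show ?thesis unfolding inv_ok_def using n1 mf Tinv c1 c2 by (auto simp: tsg_append)
  qed
qed

lemma tsg_eq:
  assumes "reduced u" "lc u" "reduced w" "lc w" "hnn_eq A C \<phi> u w"
  shows "tsg u = tsg w"
proof -
  have "nf u = nf w" using hnn_inv[OF assms(5) vs_init] .
  then have "rev (tsg u) = rev (tsg w)" using nf_red[OF assms(1,2)] nf_red[OF assms(3,4)] unfolding inv_ok_def by simp
  then show ?thesis by simp
qed

lemma cntA_sc_aux: "reduced u \<Longrightarrow> sc (tsg u) + (if u \<noteq> [] \<and> isL (hd u) \<and> tsg u \<noteq> [] then 1 else 0) \<le> cntA u"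
proof (induction u)
  case Nil
  then show ?case by simp
next
  case (Cons l u)
  have IH: "sc (tsg u) + (if u \<noteq> [] \<and> isL (hd u) \<and> tsg u \<noteq> [] then 1 else 0) \<le> cntA u"
    using Cons red_Cons by blast
  show ?case
  proof (cases l)
    case (L a)
    then show ?thesis using IH by (auto simp: cntA_def split: if_splits)
  next
    case T
    show ?thesis
    proof (cases "tsg u = [] \<or> hd (tsg u)")
      case True
      then show ?thesis using IH T by (auto simp: cntA_def sc_Cons split: if_splits)
    next
      case False
      then obtain l' u' where u: "u = l' # u'" by (cases u) auto
      have "isL l'"
      proof (cases l')
        case T then show ?thesis using False u by simp
      next
        case Tinv
        have "reduced ([] @ [T, Tinv] @ u')" using Cons.prems \<open>l = T\<close> u Tinv by simp
        then show ?thesis using red_TTi by blast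
      qed simp
      then show ?thesis using IH T False u by (auto simp: cntA_def sc_Cons split: if_splits)
    qed
  next
    case Tinv
    show ?thesis
    proof (cases "tsg u = [] \<or> \<not> hd (tsg u)")
      case True
      then show ?thesis using IH Tinv by (auto simp: cntA_def sc_Cons split: if_splits)
    next
      case False
      then obtain l' u' where u: "u = l' # u'" by (cases u) auto
      have "isL l'"
      proof (cases l')
        case Tinv then show ?thesis using False u by simp
      next
        case T
        have "reduced ([] @ [Tinv, T] @ u')" using Cons.prems \<open>l = Tinv\<close> u T by simp
        then show ?thesis using red_TiT by blast
      qed simp
      then show ?thesis using IH Tinv False u by (auto simp: cntA_def sc_Cons split: if_splits)
    qed
  qed
qed

lemma cntA_sc: "reduced u \<Longrightarrow> sc (tsg u) \<le> cntA u"
  using cntA_sc_aux by fastforce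

end


lemma alt_word_Nil: "alt_word [] [] = []"
  unfolding alt_word_def by simp

lemma alt_word_Cons: "alt_word (n # ns) (a # as) = tpow n @ [L a] @ alt_word ns as"
  unfolding alt_word_def by (simp add: map_upt_Suc del: upt_Suc)

lemma tsg_rep: "tsg (replicate k (tlet s)) = replicate k s"
  by (induction k) (cases s; auto)+

lemma sc_rep: "k \<ge> 1 \<Longrightarrow> ys \<noteq> [] \<Longrightarrow> hd ys \<noteq> s \<Longrightarrow> sc (replicate k s @ ys) = 1 + sc ys"
proof (induction k)
  case 0 then show ?case by simp
next
  case (Suc k)
  show ?case
  proof (cases k)
    case 0 then show ?thesis using Suc.prems by (simp add: sc_Cons)
  next
    case (Suc k') then show ?thesis using Suc.IH Suc.prems by (simp add: sc_Cons)
  qed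
qed

lemma tpow_eq: "(0 < n \<longleftrightarrow> s) \<Longrightarrow> tpow n = replicate (nat \<bar>n\<bar>) (tlet s)"
  unfolding tpow_def by (cases s) auto

context hnn begin

fun alt :: "bool \<Rightarrow> int list \<Rightarrow> 'a list \<Rightarrow> bool" where
  "alt s [] [] = True"
| "alt s (n # ns) (a # as) = ((0 < n \<longleftrightarrow> s) \<and> n \<noteq> 0 \<and> a \<in> carrier A \<and> a \<noteq> \<one> \<and> (s \<longrightarrow> a \<notin> C) \<and> (\<not> s \<longrightarrow> a \<notin> D) \<and> alt (\<not> s) ns as)"
| "alt s _ _ = False"

lemma alt_of_idx: "length as = length ns \<Longrightarrow>
  (\<forall>i<length ns. ns!i \<noteq> 0 \<and> as!i \<in> carrier A \<and> as!i \<noteq> \<one> \<and> (0 < ns!i \<longleftrightarrow> (s = even i))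
      \<and> (0 < ns!i \<longrightarrow> as!i \<notin> C) \<and> (ns!i < 0 \<longrightarrow> as!i \<notin> D)) \<Longrightarrow> alt s ns as"
proof (induction ns arbitrary: s as)
  case Nil then show ?case by simp
next
  case (Cons n ns)
  obtain a as' where as: "as = a # as'" using Cons.prems(1) by (cases as) auto
  have h0: "n \<noteq> 0 \<and> a \<in> carrier A \<and> a \<noteq> \<one> \<and> (0 < n \<longleftrightarrow> s) \<and> (0 < n \<longrightarrow> a \<notin> C) \<and> (n < 0 \<longrightarrow> a \<notin> D)"
    using Cons.prems(2)[rule_format, of 0] as by simp
  have "alt (\<not> s) ns as'"
  proof (rule Cons.IH)
    show "length as' = length ns" using Cons.prems(1) as by simp
    show "\<forall>i<length ns. ns!i \<noteq> 0 \<and> as'!i \<in> carrier A \<and> as'!i \<noteq> \<one> \<and> (0 < ns!i \<longleftrightarrow> ((\<not> s) = even i))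
      \<and> (0 < ns!i \<longrightarrow> as'!i \<notin> C) \<and> (ns!i < 0 \<longrightarrow> as'!i \<notin> D)"
    proof (intro allI impI)
      fix i assume i: "i < length ns"
      show "ns!i \<noteq> 0 \<and> as'!i \<in> carrier A \<and> as'!i \<noteq> \<one> \<and> (0 < ns!i \<longleftrightarrow> ((\<not> s) = even i))
      \<and> (0 < ns!i \<longrightarrow> as'!i \<notin> C) \<and> (ns!i < 0 \<longrightarrow> as'!i \<notin> D)"
        using Cons.prems(2)[rule_format, of "Suc i"] i as by auto
    qed
  qed
  then show ?case using h0 as by auto
qed

lemma red_ConsI: "\<not> bs (x # u) \<Longrightarrow> reduced u \<Longrightarrow> reduced (x # u)"
  unfolding reduced_def
proof (intro allI impI)
  fix i assume b: "\<not> bs (x # u)" and r: "\<forall>i<length u. \<not> bs (drop i u)" and i: "i < length (x # u)"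
  show "\<not> bs (drop i (x # u))"
  proof (cases i)
    case 0 then show ?thesis using b by simp
  next
    case (Suc j) then show ?thesis using r i by simp
  qed
qed

lemma red_single: "reduced [tlet s]"
  unfolding reduced_def bs_def by (cases s) auto

lemma red_L: "reduced rest \<Longrightarrow> rest \<noteq> [] \<Longrightarrow> \<not> isL (hd rest) \<Longrightarrow> a \<noteq> \<one> \<Longrightarrow> reduced (L a # rest)"
proof -
  assume r: "reduced rest" and ne: "rest \<noteq> []" and h: "\<not> isL (hd rest)" and a: "a \<noteq> \<one>"
  obtain l r' where rest: "rest = l # r'" using ne by (cases rest) auto
  have "\<not> bs (L a # rest)" using h a rest by (cases l) (auto simp: bs_def)
  then show ?thesis using r by (rule red_ConsI)
qed

lemma rep_red: "k \<ge> 1 \<Longrightarrow> reduced (L a # rest) \<Longrightarrow> rest \<noteq> [] \<Longrightarrow> hd rest = tlet (\<not> s) \<Longrightarrow>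
   (s \<longrightarrow> a \<notin> C) \<Longrightarrow> (\<not> s \<longrightarrow> a \<notin> D) \<Longrightarrow> reduced (replicate k (tlet s) @ L a # rest)"
proof (induction k)
  case 0 then show ?case by simp
next
  case (Suc k)
  obtain r' where rest: "rest = tlet (\<not> s) # r'" using Suc.prems(3,4) by (cases rest) auto
  show ?case
  proof (cases k)
    case 0
    have "\<not> bs (tlet s # L a # rest)" using Suc.prems(5,6) rest by (cases s) (auto simp: bs_def)
    then show ?thesis using 0 Suc.prems(2) red_ConsI by simp
  next
    case (Suc k')
    have "\<not> bs (tlet s # tlet s # replicate k' (tlet s) @ L a # rest)" by (cases s) (auto simp: bs_def)
    moreover have "reduced (replicate k (tlet s) @ L a # rest)"
      using Suc.IH Suc.prems(2-6) \<open>k = Suc k'\<close> by simp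
    ultimately show ?thesis using red_ConsI \<open>k = Suc k'\<close> by simp
  qed
qed

definition eS :: "bool \<Rightarrow> int list \<Rightarrow> bool" where
  "eS s ns = (if even (length ns) then s else \<not> s)"

lemma eS_Cons: "eS s (n # ns) = eS (\<not> s) ns"
  unfolding eS_def by auto

lemma alt_main: "alt s ns as \<Longrightarrow>
   reduced (alt_word ns as @ [tlet (eS s ns)]) \<and> alt_word ns as @ [tlet (eS s ns)] \<noteq> []
   \<and> hd (alt_word ns as @ [tlet (eS s ns)]) = tlet s
   \<and> tsg (alt_word ns as @ [tlet (eS s ns)]) \<noteq> [] \<and> hd (tsg (alt_word ns as @ [tlet (eS s ns)])) = s
   \<and> sc (tsg (alt_word ns as @ [tlet (eS s ns)])) = length ns
   \<and> length (tsg (alt_word ns as @ [tlet (eS s ns)])) = sum_list (map (\<lambda>n. nat \<bar>n\<bar>) ns) + 1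
   \<and> lc (alt_word ns as)
   \<and> length (alt_word ns as) = sum_list (map (\<lambda>n. nat \<bar>n\<bar>) ns) + length ns"
proof (induction s ns as rule: alt.induct)
  case (1 s)
  have "tsg [tlet s :: 'a letter] = [s]" by (cases s) auto
  then show ?case using red_single[of s] by (simp add: alt_word_Nil eS_def lc_def)
next
  case (2 s n ns a as)
  define rest where "rest = alt_word ns as @ [tlet (eS (\<not> s) ns)]"
  have h: "(0 < n \<longleftrightarrow> s)" "n \<noteq> 0" "a \<in> carrier A" "a \<noteq> \<one>" "s \<longrightarrow> a \<notin> C" "\<not> s \<longrightarrow> a \<notin> D" "alt (\<not> s) ns as"
    using "2.prems" by auto
  have IH: "reduced rest" "rest \<noteq> []" "hd rest = tlet (\<not> s)" "tsg rest \<noteq> []" "hd (tsg rest) = (\<not> s)"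
    "sc (tsg rest) = length ns" "length (tsg rest) = sum_list (map (\<lambda>n. nat \<bar>n\<bar>) ns) + 1"
    "lc (alt_word ns as)" "length (alt_word ns as) = sum_list (map (\<lambda>n. nat \<bar>n\<bar>) ns) + length ns"
    using "2.IH" h(7) unfolding rest_def by auto
  have k: "nat \<bar>n\<bar> \<ge> 1" using h(2) by simp
  have w: "alt_word (n # ns) (a # as) @ [tlet (eS s (n # ns))] = replicate (nat \<bar>n\<bar>) (tlet s) @ L a # rest"
    unfolding rest_def eS_Cons alt_word_Cons tpow_eq[OF h(1)] by simp
  have hdL: "\<not> isL (hd rest)" using IH(3) by (cases s) auto
  have r1: "reduced (L a # rest)" using red_L[OF IH(1) IH(2) hdL h(4)] .
  have red: "reduced (replicate (nat \<bar>n\<bar>) (tlet s) @ L a # rest)"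
    using rep_red[OF k r1 IH(2) IH(3) h(5) h(6)] .
  have ts: "tsg (replicate (nat \<bar>n\<bar>) (tlet s) @ L a # rest) = replicate (nat \<bar>n\<bar>) s @ tsg rest"
    by (simp add: tsg_append tsg_rep)
  have hdr: "hd (replicate (nat \<bar>n\<bar>) s @ tsg rest) = s" using k by (cases "nat \<bar>n\<bar>") auto
  have hdw: "hd (replicate (nat \<bar>n\<bar>) (tlet s) @ L a # rest) = tlet s" using k by (cases "nat \<bar>n\<bar>") auto
  have scw: "sc (replicate (nat \<bar>n\<bar>) s @ tsg rest) = 1 + length ns"
    using sc_rep[OF k IH(4)] IH(5,6) by simp
  have lcw: "lc (alt_word (n # ns) (a # as))" using IH(8) h(3) unfolding alt_word_Cons lc_def tpow_def by auto
  have lenw: "length (alt_word (n # ns) (a # as)) = sum_list (map (\<lambda>n. nat \<bar>n\<bar>) (n # ns)) + length (n # ns)"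
    using IH(9) unfolding alt_word_Cons tpow_def by simp
  show ?case unfolding w using red hdw ts hdr scw IH(4) IH(7) lcw lenw k by simp
qed auto

end


theorem lemma7p1:
  fixes A :: "('a, 'b) monoid_scheme" and C :: "'a set" and \<phi> :: "'a \<Rightarrow> 'a"
    and ns :: "int list" and as :: "'a list"
  assumes "group A"
    and "subgroup C A"
    and "\<phi> \<in> hom (A\<lparr>carrier := C\<rparr>) A"
    and "inj_on \<phi> C"
    and "C \<noteq> carrier A"
    and "\<phi> ` C \<noteq> carrier A"
    and "length as = length ns"
    and "\<forall>i < length ns. ns ! i \<noteq> 0"
    and "\<forall>i < length as. as ! i \<in> carrier A \<and> as ! i \<noteq> \<one>\<^bsub>A\<^esub>"
    and "(\<forall>i < length ns. (even i \<longrightarrow> ns ! i > 0 \<and> as ! i \<notin> C)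
                        \<and> (odd i \<longrightarrow> ns ! i < 0 \<and> as ! i \<notin> \<phi> ` C))
       \<or> (\<forall>i < length ns. (even i \<longrightarrow> ns ! i < 0 \<and> as ! i \<notin> \<phi> ` C)
                        \<and> (odd i \<longrightarrow> ns ! i > 0 \<and> as ! i \<notin> C))"
  shows "geodesic A C \<phi> (alt_word ns as)"
proof -
  interpret H: hnn A C \<phi>
    using assms(1-4) by (simp add: hnn_def hnn_axioms_def)
  obtain s where alt: "H.alt s ns as"
  proof (cases "\<forall>i < length ns. (even i \<longrightarrow> ns ! i > 0 \<and> as ! i \<notin> C)
                        \<and> (odd i \<longrightarrow> ns ! i < 0 \<and> as ! i \<notin> \<phi> ` C)")
    case True
    have "H.alt True ns as"
    proof (rule H.alt_of_idx[OF assms(7)], intro allI impI)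
      fix i assume i: "i < length ns"
      show "ns!i \<noteq> 0 \<and> as!i \<in> carrier A \<and> as!i \<noteq> \<one>\<^bsub>A\<^esub> \<and> (0 < ns!i \<longleftrightarrow> (True = even i))
      \<and> (0 < ns!i \<longrightarrow> as!i \<notin> C) \<and> (ns!i < 0 \<longrightarrow> as!i \<notin> \<phi> ` C)"
        using True[rule_format, OF i] assms(8)[rule_format, OF i] assms(9)[rule_format, of i] i assms(7)
        by (cases "even i") auto
    qed
    then show ?thesis using that by blast
  next
    case False
    then have F: "\<forall>i < length ns. (even i \<longrightarrow> ns ! i < 0 \<and> as ! i \<notin> \<phi> ` C)
                        \<and> (odd i \<longrightarrow> ns ! i > 0 \<and> as ! i \<notin> C)" using assms(10) by blast
    have "H.alt False ns as"
    proof (rule H.alt_of_idx[OF assms(7)], intro allI impI)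
      fix i assume i: "i < length ns"
      show "ns!i \<noteq> 0 \<and> as!i \<in> carrier A \<and> as!i \<noteq> \<one>\<^bsub>A\<^esub> \<and> (0 < ns!i \<longleftrightarrow> (False = even i))
      \<and> (0 < ns!i \<longrightarrow> as!i \<notin> C) \<and> (ns!i < 0 \<longrightarrow> as!i \<notin> \<phi> ` C)"
        using F[rule_format, OF i] assms(8)[rule_format, OF i] assms(9)[rule_format, of i] i assms(7)
        by (cases "even i") auto
    qed
    then show ?thesis using that by blast
  qed
  show ?thesis unfolding geodesic_def
  proof (intro allI impI)
    fix v assume vv: "valid_word A v" and eq: "hnn_eq A C \<phi> v (alt_word ns as)"
    define e where "e = H.eS s ns"
    define w' where "w' = alt_word ns as @ [tlet e]"
    have M: "H.reduced w'" "sc (tsg w') = length ns"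
      "length (tsg w') = sum_list (map (\<lambda>n. nat \<bar>n\<bar>) ns) + 1"
      "H.lc (alt_word ns as)" "length (alt_word ns as) = sum_list (map (\<lambda>n. nat \<bar>n\<bar>) ns) + length ns"
      using H.alt_main[OF alt] unfolding w'_def e_def by auto
    have lcw: "H.lc w'" using M(4) unfolding w'_def H.lc_def by (cases e) auto
    have lcv: "H.lc (v @ [tlet e])" using vv unfolding valid_word_def H.lc_def by (cases e) auto
    have eq': "hnn_eq A C \<phi> (v @ [tlet e]) w'"
      using hnn_eq.ctxt[OF eq, of "[]" "[tlet e]"] unfolding w'_def by simp
    obtain u where u: "hnn_eq A C \<phi> (v @ [tlet e]) u" "H.reduced u" "H.lc u"
      "length (tsg u) \<le> length (tsg (v @ [tlet e]))" "cntA u \<le> cntA (v @ [tlet e])"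
      using H.reduce_ex[OF lcv] by blast
    have uw: "hnn_eq A C \<phi> u w'" using hnn_eq.trans[OF hnn_eq.sym[OF u(1)] eq'] .
    have ts: "tsg u = tsg w'" using H.tsg_eq[OF u(2) u(3) M(1) lcw uw] .
    have te: "tsg [tlet e :: 'a letter] = [e]" by (cases e) auto
    have c1: "length (tsg (v @ [tlet e])) = length (tsg v) + 1" using te by (simp add: tsg_append)
    have c2: "cntA (v @ [tlet e]) = cntA v" by (cases e) (auto simp: cntA_append cntA_def)
    have "length ns \<le> cntA u" using H.cntA_sc[OF u(2)] ts M(2) by simp
    then have A1: "length ns \<le> cntA v" using u(5) c2 by simp
    have A2: "sum_list (map (\<lambda>n. nat \<bar>n\<bar>) ns) \<le> length (tsg v)" using u(4) ts M(3) c1 by simp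
    show "length (alt_word ns as) \<le> length v"
      using M(5) A1 A2 length_split[of v] by simp
  qed
qed



end
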